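(* Let $a,b\in\mathbb{H}$ be nonzero quaternions lying in the same closed orthant of $\mathbb{R}^4$, and let $\lambda,\mu\in\mathbb{H}$. Then \[ \big\|(a+b)^{-1}(a\lambda+b\mu)-\lambda\big\| \le \|\mu-\lambda\|. \]
   Context: A quaternion $w+xi+yj+zk$ is identified with the vector $(w,x,y,z)\in\mathbb{R}^4$, and $\|\cdot\|$ is the Euclidean norm (which is multiplicative on $\mathbb{H}$). Two vectors lie in the same closed orthant if for each coordinate their entries do not have strictly opposite signs. *)

theory Defs
  imports "HOL-Analysis.Analysis"
begin

text \<open>Quaternions w + x i + y j + z k are represented as vectors (w,x,y,z) in real^4,
  with components 1,2,3,4 (w = component 1). The norm is the Euclidean norm of real^4.\<close>

type_synonym quat = "real ^ 4"

definition qmult :: "quat \<Rightarrow> quat \<Rightarrow> quat" where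
  "qmult p q = (\<chi> i.
     if i = 1 then p$1*q$1 - p$2*q$2 - p$3*q$3 - p$4*q$4
     else if i = 2 then p$1*q$2 + p$2*q$1 + p$3*q$4 - p$4*q$3
     else if i = 3 then p$1*q$3 - p$2*q$4 + p$3*q$1 + p$4*q$2
     else p$1*q$4 + p$2*q$3 - p$3*q$2 + p$4*q$1)"

definition qconj :: "quat \<Rightarrow> quat" where
  "qconj p = (\<chi> i. if i = 1 then p$1 else - p$i)"

definition qinv :: "quat \<Rightarrow> quat" where
  "qinv p = (1 / (norm p)^2) *\<^sub>R qconj p"

definition same_closed_orthant :: "quat \<Rightarrow> quat \<Rightarrow> bool" where
  "same_closed_orthant a b \<longleftrightarrow>
     (\<forall>i. \<not> (a$i > 0 \<and> b$i < 0) \<and> \<not> (a$i < 0 \<and> b$i > 0))"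

end

theory Submission
  imports Defs
begin

lemma inner4: "inner (p::quat) q = p$1*q$1 + p$2*q$2 + p$3*q$3 + p$4*q$4"
  by (simp add: inner_vec_def sum_4)

lemma nsq: "(norm (p::quat))^2 = p$1^2 + p$2^2 + p$3^2 + p$4^2"
  unfolding power2_norm_eq_inner inner4 by (simp add: power2_eq_square)

lemma qmult_comp:
  "qmult p q $ 1 = p$1*q$1 - p$2*q$2 - p$3*q$3 - p$4*q$4"
  "qmult p q $ 2 = p$1*q$2 + p$2*q$1 + p$3*q$4 - p$4*q$3"
  "qmult p q $ 3 = p$1*q$3 - p$2*q$4 + p$3*q$1 + p$4*q$2"
  "qmult p q $ 4 = p$1*q$4 + p$2*q$3 - p$3*q$2 + p$4*q$1"
  by (simp_all add: qmult_def)

lemma norm_qmult: "norm (qmult p q) = norm p * norm q"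
proof -
  have "(norm (qmult p q))^2 = (norm p * norm q)^2"
    unfolding power_mult_distrib nsq qmult_comp by algebra
  thus ?thesis by (simp add: power2_eq_iff_nonneg)
qed

lemma norm_qconj: "norm (qconj p) = norm p"
proof -
  have "(norm (qconj p))^2 = (norm p)^2"
    unfolding nsq by (simp add: qconj_def)
  thus ?thesis by (simp add: power2_eq_iff_nonneg)
qed

lemma norm_qinv: "norm (qinv p) = 1 / norm p"
  by (simp add: qinv_def norm_qconj power2_eq_square)

lemma qinv_cancel:
  assumes "s \<noteq> 0"
  shows "qmult (qinv s) (qmult s l) = l"
proof -
  have N: "(norm s)^2 \<noteq> 0" using assms by simp
  define N where "N = (norm s)^2"
  have Ne: "N = s$1^2 + s$2^2 + s$3^2 + s$4^2" using N_def nsq by simp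
  have NZ: "N \<noteq> 0" using N N_def by simp
  have q1: "qinv s $ 1 = s$1 / N" "qinv s $ 2 = - s$2 / N" "qinv s $ 3 = - s$3 / N" "qinv s $ 4 = - s$4 / N"
    by (simp_all add: qinv_def qconj_def N_def)
  show ?thesis
    unfolding vec_eq_iff forall_4 qmult_comp q1
    using NZ Ne apply (intro conjI)
    by (simp_all add: divide_simps power2_eq_square) (simp_all add: algebra_simps)
qed

theorem lemma4p2:
  fixes a b l m :: quat
  assumes "a \<noteq> 0" and "b \<noteq> 0" and "same_closed_orthant a b"
  shows "norm (qmult (qinv (a + b)) (qmult a l + qmult b m) - l) \<le> norm (m - l)"
proof -
  have ip: "inner a b \<ge> 0"
  proof -
    have "\<And>i. a$i * b$i \<ge> 0" using assms(3) unfolding same_closed_orthant_def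
      by (meson linorder_not_le mult_nonneg_nonneg mult_nonpos_nonpos order.strict_iff_not)
    thus ?thesis by (simp add: inner_vec_def sum_nonneg)
  qed
  have sq: "(norm (a+b))^2 = (norm a)^2 + (norm b)^2 + 2 * inner a b"
    by (simp add: power2_norm_eq_inner inner_add_left inner_add_right inner_commute)
  have "(norm b)^2 \<le> (norm (a+b))^2" using sq ip by simp
  hence le: "norm b \<le> norm (a+b)" by (simp add: power2_le_iff_abs_le)
  have s0: "a + b \<noteq> 0"
  proof
    assume "a + b = 0" then have "(norm (a+b))^2 = 0" by simp
    with sq ip have "(norm a)^2 \<le> 0" by (smt (verit) zero_le_power2)
    with assms(1) show False by simp
  qed
  have dist: "qmult a l + qmult b m = qmult (a+b) l + qmult b (m - l)"
    unfolding vec_eq_iff forall_4 by (simp add: qmult_comp algebra_simps)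
  have dist2: "qmult p (x + y) = qmult p x + qmult p y" for p x y
    unfolding vec_eq_iff forall_4 by (simp add: qmult_comp algebra_simps)
  have "qmult (qinv (a + b)) (qmult a l + qmult b m) - l = qmult (qinv (a+b)) (qmult b (m - l))"
    unfolding dist dist2 qinv_cancel[OF s0] by simp
  hence "norm (qmult (qinv (a + b)) (qmult a l + qmult b m) - l) = norm b / norm (a+b) * norm (m - l)"
    by (simp add: norm_qmult norm_qinv)
  also have "\<dots> \<le> 1 * norm (m - l)"
    using le s0 by (intro mult_right_mono) (auto simp: divide_le_eq)
  finally show ?thesis by simp
qed

end
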